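(* Let $a_0,a_1,a_2,a_3\in\mathbb{R}$ and consider the monic binary quartic form $$f(x,y)=x^4+a_3x^3y+a_2x^2y^2+a_1xy^3+a_0y^4 .$$ Let $$b_0=\tfrac14\,(-a_1^2+a_1a_2a_3-a_0a_3^2),\quad b_1=\tfrac14\,(4a_0-a_2^2-a_1a_3),\quad b_2=\tfrac{a_2}{2},\quad \lambda_0=\frac{4b_2+2\sqrt{3b_1+4b_2^2}}{3}.$$ Then $f$ is positive semi-definite if and only if $\lambda_0$ is real and $$\lambda_0\ge \frac{a_3^2}{4},\qquad -\tfrac14\lambda_0^3+b_2\lambda_0^2+b_1\lambda_0+b_0\ge 0 .$$ Moreover, $f$ is positive definite if and only if $\lambda_0$ is real and $$\lambda_0> \frac{a_3^2}{4},\qquad -\tfrac14\lambda_0^3+b_2\lambda_0^2+b_1\lambda_0+b_0> 0 .$$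
   Context: A binary form $f(x,y)$ with real coefficients is positive definite (resp. positive semi-definite) if $f(x,y)>0$ (resp. $f(x,y)\ge 0$) for all real $x,y$ not both zero. The quantity $\lambda_0$ is real exactly when $3b_1+4b_2^2\ge 0$. *)

theory Defs
  imports Complex_Main
begin

definition quartic_form :: "real \<Rightarrow> real \<Rightarrow> real \<Rightarrow> real \<Rightarrow> real \<Rightarrow> real \<Rightarrow> real" where
  "quartic_form a0 a1 a2 a3 x y =
     x^4 + a3 * x^3 * y + a2 * x^2 * y^2 + a1 * x * y^3 + a0 * y^4"

definition pos_semidef_form :: "(real \<Rightarrow> real \<Rightarrow> real) \<Rightarrow> bool" where
  "pos_semidef_form f \<longleftrightarrow> (\<forall>x y. (x \<noteq> 0 \<or> y \<noteq> 0) \<longrightarrow> f x y \<ge> 0)"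

definition pos_def_form :: "(real \<Rightarrow> real \<Rightarrow> real) \<Rightarrow> bool" where
  "pos_def_form f \<longleftrightarrow> (\<forall>x y. (x \<noteq> 0 \<or> y \<noteq> 0) \<longrightarrow> f x y > 0)"

end

theory Submission imports Defs begin

definition gg :: "real \<Rightarrow> real \<Rightarrow> real \<Rightarrow> real \<Rightarrow> real" where
  "gg b0 b1 b2 l = - (1/4) * l^3 + b2 * l^2 + b1 * l + b0"
definition gd :: "real \<Rightarrow> real \<Rightarrow> real \<Rightarrow> real" where
  "gd b1 b2 l = - (3/4) * l^2 + 2 * b2 * l + b1"

lemma F1: "gg b0 b1 b2 u - gg b0 b1 b2 v = (u - v) * (gd b1 b2 ((u+v)/2) - (u-v)^2/16)"
  unfolding gg_def gd_def by (simp add: algebra_simps power2_eq_square power3_eq_cube divide_simps)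

lemma F2: "gd b1 b2 p = -(3/4) * (p - 4*b2/3)^2 + (3*b1 + 4*b2^2)/3"
  unfolding gd_def by (simp add: algebra_simps power2_eq_square divide_simps)

lemma F3: assumes "s\<^sup>2 = 3*b1+4*b2^2" "l0 = (4*b2 + 2*s)/3"
  shows "gg b0 b1 b2 l0 - gg b0 b1 b2 l = (1/4) * (l - l0)^2 * (l - 4*b2 + 2*l0)"
proof -
  have b1: "b1 = (s^2 - 4*b2^2)/3" using assms(1) by simp
  show ?thesis unfolding gg_def assms(2) b1 by (simp add: algebra_simps power2_eq_square power3_eq_cube divide_simps)
qed

lemma cubic:
  assumes "l1 \<ge> c" "gg b0 b1 b2 l1 \<ge> 0" "gg b0 b1 b2 c \<le> 0"
    "l1 = c \<Longrightarrow> gd b1 b2 c \<ge> 0"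
  shows "3*b1+4*b2^2 \<ge> 0 \<and> (4*b2 + 2*sqrt(3*b1+4*b2^2))/3 \<ge> c
     \<and> gg b0 b1 b2 ((4*b2 + 2*sqrt(3*b1+4*b2^2))/3) \<ge> 0"
proof -
  define p where "p = (l1 + c)/2"
  have pge: "gd b1 b2 p \<ge> 0"
  proof (cases "l1 = c")
    case True then show ?thesis using assms(4) p_def by simp
  next
    case False
    then have lt: "l1 - c > 0" using assms(1) by simp
    have "0 \<le> gg b0 b1 b2 l1 - gg b0 b1 b2 c" using assms by simp
    also have "\<dots> = (l1 - c) * (gd b1 b2 p - (l1-c)^2/16)" unfolding p_def by (rule F1)
    finally have "gd b1 b2 p - (l1-c)^2/16 \<ge> 0" using lt by (simp add: zero_le_mult_iff)
    moreover have "(l1-c)^2/16 \<ge> 0" by simp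
    ultimately show ?thesis by linarith
  qed
  define d where "d = 3*b1+4*b2^2"
  have sq0: "(p - 4*b2/3)^2 \<ge> 0" by simp
  have d0: "d \<ge> 0" proof -
    have "(3*b1+4*b2^2)/3 \<ge> 0" using pge F2[of b1 b2 p] sq0 by linarith
    then show ?thesis unfolding d_def by simp
  qed
  define s where "s = sqrt d"
  have s2: "s^2 = d" "s \<ge> 0" using d0 s_def by auto
  have e: "(2*s/3)^2 = 4*d/9" using s2 by (simp add: power_divide power_mult_distrib)
  have X: "(p - 4*b2/3)^2 \<le> (2*s/3)^2" unfolding e using pge F2[of b1 b2 p] unfolding d_def by linarith
  have "p - 4*b2/3 \<le> 2*s/3" by (rule power2_le_imp_le) (use X s2 in \<open>auto simp: power2_commute\<close>)
  moreover have "-(p - 4*b2/3) \<le> 2*s/3" by (rule power2_le_imp_le) (use X s2 in \<open>auto simp: power2_commute\<close>)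
  ultimately have pr: "p \<le> (4*b2 + 2*s)/3" "p \<ge> (4*b2 - 2*s)/3" by auto
  define l0 where "l0 = (4*b2 + 2*s)/3"
  have "gg b0 b1 b2 l0 - gg b0 b1 b2 l1 = (1/4) * (l1 - l0)^2 * (l1 - 4*b2 + 2*l0)"
    using F3[OF _ l0_def] s2 d_def by simp
  moreover have "l1 - 4*b2 + 2*l0 \<ge> 0" using pr p_def assms(1) s2 l0_def by simp
  moreover have "(1/4) * (l1 - l0)^2 \<ge> 0" by simp
  ultimately have "gg b0 b1 b2 l0 \<ge> gg b0 b1 b2 l1" by (metis diff_ge_0_iff_ge mult_nonneg_nonneg)
  then show ?thesis using assms pr p_def d0 d_def s_def l0_def by simp
qed


definition pp :: "real \<Rightarrow> real \<Rightarrow> real \<Rightarrow> real \<Rightarrow> real \<Rightarrow> real" where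
  "pp a0 a1 a2 a3 x = x^4 + a3 * x^3 + a2 * x^2 + a1 * x + a0"
definition pd :: "real \<Rightarrow> real \<Rightarrow> real \<Rightarrow> real \<Rightarrow> real" where
  "pd a1 a2 a3 x = 4 * x^3 + 3 * a3 * x^2 + 2 * a2 * x + a1"

lemma pp_deriv: "DERIV (pp a0 a1 a2 a3) x :> pd a1 a2 a3 x"
  unfolding pp_def pd_def
  apply (rule derivative_eq_intros refl | simp)+
  done

lemma pp_big:
  assumes "\<bar>x\<bar> \<ge> \<bar>a1\<bar> + \<bar>a2\<bar> + \<bar>a3\<bar> + 1"
  shows "pp a0 a1 a2 a3 x > a0"
proof -
  define u where "u = \<bar>x\<bar>"
  have u1: "u \<ge> 1" using assms u_def by simp
  have h3: "a3 * x^3 \<ge> - (\<bar>a3\<bar> * u^3)"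
  proof -
    have "\<bar>a3 * x^3\<bar> = \<bar>a3\<bar> * u^3" by (simp add: u_def abs_mult power_abs)
    then show ?thesis using abs_ge_minus_self[of "a3 * x^3"] by linarith
  qed
  have h2: "a2 * x^2 \<ge> - (\<bar>a2\<bar> * u^3)"
  proof -
    have "\<bar>a2 * x^2\<bar> = \<bar>a2\<bar> * u^2" by (simp add: u_def abs_mult power_abs)
    also have "\<dots> \<le> \<bar>a2\<bar> * u^3" using u1
      by (intro mult_left_mono) (auto simp: power_increasing)
    finally show ?thesis by linarith
  qed
  have h1: "a1 * x \<ge> - (\<bar>a1\<bar> * u^3)"
  proof -
    have "\<bar>a1 * x\<bar> = \<bar>a1\<bar> * u" by (simp add: u_def abs_mult)
    also have "\<dots> \<le> \<bar>a1\<bar> * u^3" using u1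
      by (intro mult_left_mono) (auto simp: power_increasing[of 1 3 u, simplified])
    finally show ?thesis by linarith
  qed
  have x4a: "x^4 = u^4" by (simp add: u_def)
  have x4: "x^4 = u^3 * u" unfolding x4a by (simp add: power4_eq_xxxx power3_eq_cube)
  have "u^3 * u \<ge> u^3 * (\<bar>a1\<bar> + \<bar>a2\<bar> + \<bar>a3\<bar> + 1)"
    using assms u_def by (intro mult_left_mono) auto
  moreover have "u^3 > 0" using u1 by simp
  moreover have "u^3 * (\<bar>a1\<bar> + \<bar>a2\<bar> + \<bar>a3\<bar> + 1) = u^3 * (\<bar>a1\<bar> + \<bar>a2\<bar> + \<bar>a3\<bar>) + u^3"
    by (simp add: algebra_simps)
  ultimately have "x^4 - u^3 * (\<bar>a1\<bar> + \<bar>a2\<bar> + \<bar>a3\<bar>) > 0" unfolding x4 by linarith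
  then show ?thesis unfolding pp_def using h1 h2 h3 by (simp add: algebra_simps)
qed

lemma pp_min: "\<exists>x0. \<forall>x. pp a0 a1 a2 a3 x0 \<le> pp a0 a1 a2 a3 x"
proof -
  define R where "R = \<bar>a1\<bar> + \<bar>a2\<bar> + \<bar>a3\<bar> + 1"
  have cont: "continuous_on {-R..R} (pp a0 a1 a2 a3)"
    unfolding pp_def by (intro continuous_intros)
  have "R \<ge> 0" unfolding R_def by simp
  then obtain x0 where x0: "x0 \<in> {-R..R}" "\<forall>y\<in>{-R..R}. pp a0 a1 a2 a3 x0 \<le> pp a0 a1 a2 a3 y"
    using continuous_attains_inf[OF compact_Icc _ cont] by auto
  have "pp a0 a1 a2 a3 x0 \<le> pp a0 a1 a2 a3 0" using x0 \<open>R \<ge> 0\<close> by auto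
  also have "\<dots> = a0" by (simp add: pp_def)
  finally have le: "pp a0 a1 a2 a3 x0 \<le> a0" .
  have "pp a0 a1 a2 a3 x0 \<le> pp a0 a1 a2 a3 x" for x
  proof (cases "x \<in> {-R..R}")
    case True then show ?thesis using x0 by auto
  next
    case False then have "\<bar>x\<bar> \<ge> R" by auto
    then show ?thesis using pp_big[of a1 a2 a3 x a0] le R_def by simp
  qed
  then show ?thesis by blast
qed


locale bs =
  fixes a0 a1 a2 a3 b0 b1 b2 :: real
  assumes b0: "b0 = (- (a1^2) + a1 * a2 * a3 - a0 * a3^2) / 4"
      and b1: "b1 = (4 * a0 - a2^2 - a1 * a3) / 4"
      and b2: "b2 = a2 / 2"
begin

lemma I1: "4 * gg b0 b1 b2 l = 4*(l - a3^2/4)*(a0 - ((a2-l)/2)^2) - (a1 - a3*((a2-l)/2))^2"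
  unfolding gg_def b0 b1 b2 by (simp add: algebra_simps power2_eq_square power3_eq_cube divide_simps)

lemma I4: "4 * gd b1 b2 l = 4*(a0 - ((a2-l)/2)^2) + 4*(l - a3^2/4)*((a2-l)/2) - a3*(a1 - a3*((a2-l)/2))"
  unfolding gd_def b1 b2 by (simp add: algebra_simps power2_eq_square divide_simps)

lemma I3: "4 * gg b0 b1 b2 (a2 + a3*x0 + 2*x0^2) = 4*((a2 + a3*x0 + 2*x0^2) - a3^2/4)*pp a0 a1 a2 a3 x0 - (pd a1 a2 a3 x0)^2"
  unfolding gg_def b0 b1 b2 pp_def pd_def
  by (simp add: algebra_simps power2_eq_square power3_eq_cube power4_eq_xxxx divide_simps)

lemma I4': "4 * gd b1 b2 (a2 + a3*x0 + 2*x0^2) = 4*pp a0 a1 a2 a3 x0 - (4*x0 + a3) * pd a1 a2 a3 x0"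
  unfolding gd_def b1 b2 pp_def pd_def
  by (simp add: algebra_simps power2_eq_square power3_eq_cube power4_eq_xxxx divide_simps)

end

lemma I2: "pp a0 a1 a2 a3 x = (x^2 + a3/2*x + (a2-l)/2)^2 + (l - a3^2/4)*x^2 + (a1 - a3*((a2-l)/2))*x + (a0 - ((a2-l)/2)^2)"
  unfolding pp_def by (simp add: algebra_simps power2_eq_square power3_eq_cube power4_eq_xxxx divide_simps)

lemma I5: "pp a0 a1 a2 a3 x - pp a0 a1 a2 a3 x0 - pd a1 a2 a3 x0 * (x - x0) =
   (x-x0)^2 * ((x + x0 + a3/2)^2 + (a2 + a3*x0 + 2*x0^2 - a3^2/4))"
  unfolding pp_def pd_def by (simp add: algebra_simps power2_eq_square power3_eq_cube power4_eq_xxxx divide_simps)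


context bs begin

lemma R_nonneg:
  fixes A B C x :: real
  assumes "A \<ge> 0" "4*A*C - B^2 \<ge> 0" "A = 0 \<Longrightarrow> C = 0"
  shows "A*x^2 + B*x + C \<ge> 0"
proof (cases "A = 0")
  case True
  then have "B^2 \<le> 0" using assms by simp
  then have "B = 0" by simp
  then show ?thesis using True assms by simp
next
  case False
  then have Ap: "A > 0" using assms by simp
  have "4*A*(A*x^2 + B*x + C) = (2*A*x+B)^2 + (4*A*C - B^2)" by (simp add: algebra_simps power2_eq_square)
  also have "\<dots> \<ge> 0" using assms by simp
  finally show ?thesis using Ap by (simp add: zero_le_mult_iff)
qed

lemma R_pos:
  fixes A B C x :: real
  assumes "A > 0" "4*A*C - B^2 > 0"
  shows "A*x^2 + B*x + C > 0"
proof -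
  have "4*A*(A*x^2 + B*x + C) = (2*A*x+B)^2 + (4*A*C - B^2)" by (simp add: algebra_simps power2_eq_square)
  also have "\<dots> > 0" using assms by (simp add: add_nonneg_pos)
  finally show ?thesis using assms by (simp add: zero_less_mult_iff)
qed

lemma F4: assumes "s\<^sup>2 = 3*b1+4*b2^2" shows "gd b1 b2 ((4*b2 + 2*s)/3) = 0"
proof -
  have b1': "b1 = (s^2 - 4*b2^2)/3" using assms by simp
  show ?thesis unfolding gd_def b1' by (simp add: algebra_simps power2_eq_square divide_simps)
qed

lemma suff:
  defines "l0 \<equiv> (4*b2 + 2*sqrt(3*b1+4*b2^2))/3"
  assumes d: "3*b1+4*b2^2 \<ge> 0" and l: "l0 \<ge> a3^2/4" and g: "gg b0 b1 b2 l0 \<ge> 0"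
  shows "pp a0 a1 a2 a3 x \<ge> 0"
proof -
  define A where "A = l0 - a3^2/4"
  define B where "B = a1 - a3*((a2-l0)/2)"
  define C where "C = a0 - ((a2-l0)/2)^2"
  have disc: "4*A*C - B^2 \<ge> 0" using I1[of l0] g unfolding A_def B_def C_def by linarith
  moreover have "A = 0 \<Longrightarrow> C = 0"
  proof -
    assume A0: "A = 0"
    then have "B^2 \<le> 0" using disc by simp
    then have B0: "B = 0" by simp
    have "gd b1 b2 l0 = 0" unfolding l0_def by (rule F4) (use d in simp)
    moreover have "4 * gd b1 b2 l0 = 4*C + 4*A*((a2-l0)/2) - a3*B" using I4[of l0] unfolding A_def B_def C_def by simp
    ultimately show "C = 0" using A0 B0 by simp
  qed
  ultimately have "A*x^2 + B*x + C \<ge> 0" using R_nonneg l A_def by simp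
  moreover have "(x^2 + a3/2*x + (a2-l0)/2)^2 \<ge> 0" by simp
  ultimately show ?thesis unfolding I2[of a0 a1 a2 a3 x l0] A_def B_def C_def by linarith
qed

lemma suff_strict:
  defines "l0 \<equiv> (4*b2 + 2*sqrt(3*b1+4*b2^2))/3"
  assumes l: "l0 > a3^2/4" and g: "gg b0 b1 b2 l0 > 0"
  shows "pp a0 a1 a2 a3 x > 0"
proof -
  define A where "A = l0 - a3^2/4"
  define B where "B = a1 - a3*((a2-l0)/2)"
  define C where "C = a0 - ((a2-l0)/2)^2"
  have "4*A*C - B^2 > 0" using I1[of l0] g unfolding A_def B_def C_def by linarith
  then have "A*x^2 + B*x + C > 0" using R_pos l A_def by simp
  moreover have "(x^2 + a3/2*x + (a2-l0)/2)^2 \<ge> 0" by simp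
  ultimately show ?thesis unfolding I2[of a0 a1 a2 a3 x l0] A_def B_def C_def by linarith
qed

lemma nec:
  defines "l0 \<equiv> (4*b2 + 2*sqrt(3*b1+4*b2^2))/3"
  assumes psd: "\<And>x. pp a0 a1 a2 a3 x \<ge> 0"
  shows "3*b1+4*b2^2 \<ge> 0 \<and> l0 \<ge> a3^2/4 \<and> gg b0 b1 b2 l0 \<ge> 0"
proof -
  obtain x0 where x0: "\<And>x. pp a0 a1 a2 a3 x0 \<le> pp a0 a1 a2 a3 x" using pp_min by blast
  have pd0: "pd a1 a2 a3 x0 = 0"
    by (rule DERIV_local_min[OF pp_deriv, of 1]) (use x0 in auto)
  define A where "A = a2 + a3*x0 + 2*x0^2 - a3^2/4"
  define x1 where "x1 = - x0 - a3/2"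
  have key: "pp a0 a1 a2 a3 x - pp a0 a1 a2 a3 x0 = (x-x0)^2 * ((x - x1)^2 + A)" for x
    using I5[of a0 a1 a2 a3 x x0] pd0 unfolding A_def x1_def by (simp add: algebra_simps)
  have A0: "A \<ge> 0"
  proof (rule ccontr)
    assume "\<not> A \<ge> 0"
    then have An: "A < 0" by simp
    define e where "e = sqrt (-A) / 2"
    have e2: "e^2 = -A/4" using An by (simp add: e_def power_divide)
    have ep: "e > 0" unfolding e_def using An by simp
    have ex: "\<exists>x. (x = x1 + e \<or> x = x1 - e) \<and> x \<noteq> x0"
    proof (cases "x1 + e = x0")
      case True then show ?thesis using ep by (intro exI[of _ "x1 - e"]) auto
    next
      case False then show ?thesis by (intro exI[of _ "x1 + e"]) auto
    qed
    then obtain x where x: "x = x1 + e \<or> x = x1 - e" and xne: "x \<noteq> x0" by blast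
    have "(x - x1)^2 = e^2" using x by (auto simp: power2_eq_square)
    then have neg: "(x - x1)^2 + A < 0" using e2 An by simp
    have "(x-x0)^2 > 0" using xne by simp
    then have "(x-x0)^2 * ((x - x1)^2 + A) < 0" using neg by (simp add: mult_pos_neg)
    then show False using key[of x] x0[of x] by simp
  qed
  define l1 where "l1 = a2 + a3*x0 + 2*x0^2"
  have "4 * gg b0 b1 b2 l1 = 4*A*pp a0 a1 a2 a3 x0" using I3[of x0] pd0 unfolding l1_def A_def by simp
  then have g1: "gg b0 b1 b2 l1 \<ge> 0" using A0 psd[of x0] by simp
  have "4 * gg b0 b1 b2 (a3^2/4) + (a1 - a3*((a2 - a3^2/4)/2))^2 = 0" using I1[of "a3^2/4"] by simp
  then have "4 * gg b0 b1 b2 (a3^2/4) \<le> 0" by (metis add_nonneg_nonneg zero_le_power2 linorder_not_le less_add_same_cancel2 not_less)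
  then have gc: "gg b0 b1 b2 (a3^2/4) \<le> 0" by simp
  have gdc: "gd b1 b2 (a3^2/4) \<ge> 0" if "l1 = a3^2/4"
    using I4'[of x0] pd0 psd[of x0] that unfolding l1_def by simp
  have "3*b1+4*b2^2 \<ge> 0 \<and> (4*b2 + 2*sqrt(3*b1+4*b2^2))/3 \<ge> a3^2/4
     \<and> gg b0 b1 b2 ((4*b2 + 2*sqrt(3*b1+4*b2^2))/3) \<ge> 0"
    by (rule cubic[of "a3^2/4" l1]) (use A0 g1 gc gdc in \<open>auto simp: A_def l1_def\<close>)
  then show ?thesis unfolding l0_def .
qed

end


lemma gg_shift: "gg (b0 + m*a3^2/4) (b1 - m) b2 l = gg b0 b1 b2 l - m*(l - a3^2/4)"
  unfolding gg_def by (simp add: algebra_simps)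

lemma nec_strict:
  assumes B: "bs a0 a1 a2 a3 b0 b1 b2"
  assumes pd: "\<And>x. pp a0 a1 a2 a3 x > 0"
  shows "3*b1+4*b2^2 \<ge> 0 \<and> (4*b2 + 2*sqrt(3*b1+4*b2^2))/3 > a3^2/4
     \<and> gg b0 b1 b2 ((4*b2 + 2*sqrt(3*b1+4*b2^2))/3) > 0"
proof -
  obtain x0 where x0: "\<And>x. pp a0 a1 a2 a3 x0 \<le> pp a0 a1 a2 a3 x" using pp_min by blast
  define m where "m = pp a0 a1 a2 a3 x0"
  have mp: "m > 0" using pd m_def by simp
  have B': "bs (a0 - m) a1 a2 a3 (b0 + m*a3^2/4) (b1 - m) b2"
    using B unfolding bs_def by (simp add: algebra_simps)
  have "pp (a0 - m) a1 a2 a3 x \<ge> 0" for x using x0[of x] unfolding m_def pp_def by simp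
  then have N: "3*(b1-m)+4*b2^2 \<ge> 0 \<and> (4*b2 + 2*sqrt(3*(b1-m)+4*b2^2))/3 \<ge> a3^2/4
     \<and> gg (b0 + m*a3^2/4) (b1 - m) b2 ((4*b2 + 2*sqrt(3*(b1-m)+4*b2^2))/3) \<ge> 0"
    using bs.nec[OF B'] by blast
  define d where "d = 3*b1+4*b2^2"
  define d' where "d' = 3*(b1-m)+4*b2^2"
  have dd: "d' = d - 3*m" unfolding d_def d'_def by simp
  have d'0: "d' \<ge> 0" using N d'_def by simp
  have d0: "d > 0" using d'0 dd mp by simp
  define s where "s = sqrt d"
  define s' where "s' = sqrt d'"
  have ss: "s' < s" unfolding s_def s'_def using dd mp by simp
  have s'0: "s' \<ge> 0" unfolding s'_def using d'0 by simp
  define l0 where "l0 = (4*b2 + 2*s)/3"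
  define l0' where "l0' = (4*b2 + 2*s')/3"
  have l0'c: "l0' \<ge> a3^2/4" using N unfolding l0'_def s'_def d'_def by simp
  have g': "gg b0 b1 b2 l0' - m*(l0' - a3^2/4) \<ge> 0"
    using N gg_shift[of b0 m a3 b1 b2 l0'] unfolding l0'_def s'_def d'_def by simp
  have "m*(l0' - a3^2/4) \<ge> 0" using l0'c mp by (intro mult_nonneg_nonneg) auto
  then have g'0: "gg b0 b1 b2 l0' \<ge> 0" using g' by linarith
  have s2: "s^2 = 3*b1+4*b2^2" unfolding s_def d_def using d0 d_def by simp
  have "gg b0 b1 b2 l0 - gg b0 b1 b2 l0' = (1/4) * (l0' - l0)^2 * (l0' - 4*b2 + 2*l0)"
    by (rule F3[OF s2 l0_def])
  moreover have "(l0' - l0)^2 > 0" using ss unfolding l0_def l0'_def by simp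
  moreover have "l0' - 4*b2 + 2*l0 > 0" using ss s'0 unfolding l0_def l0'_def by (simp add: field_simps)
  ultimately have "(1/4) * (l0' - l0)^2 * (l0' - 4*b2 + 2*l0) > 0" by (intro mult_pos_pos) auto
  then have gl: "gg b0 b1 b2 l0 > gg b0 b1 b2 l0'" using \<open>gg b0 b1 b2 l0 - gg b0 b1 b2 l0' = _\<close> by linarith
  have "l0 > l0'" using ss unfolding l0_def l0'_def by simp
  then show ?thesis using gl g'0 l0'c d0 unfolding l0_def s_def d_def by simp
qed


lemma qf_hom: "y \<noteq> 0 \<Longrightarrow> quartic_form a0 a1 a2 a3 x y = y^4 * pp a0 a1 a2 a3 (x/y)"
  unfolding quartic_form_def pp_def by (simp add: field_simps power2_eq_square power3_eq_cube power4_eq_xxxx)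

lemma psd_iff: "pos_semidef_form (quartic_form a0 a1 a2 a3) \<longleftrightarrow> (\<forall>x. pp a0 a1 a2 a3 x \<ge> 0)"
proof
  assume h: "pos_semidef_form (quartic_form a0 a1 a2 a3)"
  show "\<forall>x. pp a0 a1 a2 a3 x \<ge> 0"
  proof
    fix x
    have "quartic_form a0 a1 a2 a3 x 1 \<ge> 0" using h unfolding pos_semidef_form_def by simp
    then show "pp a0 a1 a2 a3 x \<ge> 0" using qf_hom[of 1 a0 a1 a2 a3 x] by simp
  qed
next
  assume h: "\<forall>x. pp a0 a1 a2 a3 x \<ge> 0"
  show "pos_semidef_form (quartic_form a0 a1 a2 a3)" unfolding pos_semidef_form_def
  proof (intro allI impI)
    fix x y :: real
    show "quartic_form a0 a1 a2 a3 x y \<ge> 0"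
    proof (cases "y = 0")
      case True then show ?thesis by (simp add: quartic_form_def)
    next
      case False then show ?thesis using qf_hom[OF False] h by simp
    qed
  qed
qed

lemma pd_iff: "pos_def_form (quartic_form a0 a1 a2 a3) \<longleftrightarrow> (\<forall>x. pp a0 a1 a2 a3 x > 0)"
proof
  assume h: "pos_def_form (quartic_form a0 a1 a2 a3)"
  show "\<forall>x. pp a0 a1 a2 a3 x > 0"
  proof
    fix x
    have "quartic_form a0 a1 a2 a3 x 1 > 0" using h unfolding pos_def_form_def by simp
    then show "pp a0 a1 a2 a3 x > 0" using qf_hom[of 1 a0 a1 a2 a3 x] by simp
  qed
next
  assume h: "\<forall>x. pp a0 a1 a2 a3 x > 0"
  show "pos_def_form (quartic_form a0 a1 a2 a3)" unfolding pos_def_form_def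
  proof (intro allI impI)
    fix x y :: real
    assume nz: "x \<noteq> 0 \<or> y \<noteq> 0"
    show "quartic_form a0 a1 a2 a3 x y > 0"
    proof (cases "y = 0")
      case True then show ?thesis using nz by (simp add: quartic_form_def)
    next
      case False then show ?thesis using qf_hom[OF False] h by simp
    qed
  qed
qed

theorem theorem2:
  fixes a0 a1 a2 a3 :: real
  defines "b0 \<equiv> (- (a1^2) + a1 * a2 * a3 - a0 * a3^2) / 4"
      and "b1 \<equiv> (4 * a0 - a2^2 - a1 * a3) / 4"
      and "b2 \<equiv> a2 / 2"
  defines "lam0 \<equiv> (4 * b2 + 2 * sqrt (3 * b1 + 4 * b2^2)) / 3"
  shows "(pos_semidef_form (quartic_form a0 a1 a2 a3) \<longleftrightarrow>
            (3 * b1 + 4 * b2^2 \<ge> 0 \<and> lam0 \<ge> a3^2 / 4 \<and>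
             - (1/4) * lam0^3 + b2 * lam0^2 + b1 * lam0 + b0 \<ge> 0))
       \<and> (pos_def_form (quartic_form a0 a1 a2 a3) \<longleftrightarrow>
            (3 * b1 + 4 * b2^2 \<ge> 0 \<and> lam0 > a3^2 / 4 \<and>
             - (1/4) * lam0^3 + b2 * lam0^2 + b1 * lam0 + b0 > 0))"
proof -
  have B: "bs a0 a1 a2 a3 b0 b1 b2" unfolding bs_def b0_def b1_def b2_def by simp
  have gq: "- (1/4) * lam0^3 + b2 * lam0^2 + b1 * lam0 + b0 = gg b0 b1 b2 lam0" by (simp add: gg_def)
  have P: "pos_semidef_form (quartic_form a0 a1 a2 a3) \<longleftrightarrow>
            (3 * b1 + 4 * b2^2 \<ge> 0 \<and> lam0 \<ge> a3^2 / 4 \<and> gg b0 b1 b2 lam0 \<ge> 0)"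
    unfolding psd_iff lam0_def using bs.nec[OF B] bs.suff[OF B] by blast
  have Q: "pos_def_form (quartic_form a0 a1 a2 a3) \<longleftrightarrow>
            (3 * b1 + 4 * b2^2 \<ge> 0 \<and> lam0 > a3^2 / 4 \<and> gg b0 b1 b2 lam0 > 0)"
    unfolding pd_iff lam0_def using nec_strict[OF B] bs.suff_strict[OF B] by blast
  show ?thesis unfolding gq using P Q by blast
qed

end
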